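(* Let $S$ be a simple $(l,r)$-framed algebra, $D_S=\{d:\bigoplus_cS_{(d,c)}\ne0\}$, and for $d\in\mathbb{Z}_2^{l+r}$ let $A_S(d)=\bigoplus_{c}S_{(d,c)}$. Let $d\in D_S$ and let $N\subset A_S(d)$ be an $\mathrm{IS}^{(l,r)}$-graded subspace with $a\cdot n\in N$ for all $a\in A_S(0)$, $n\in N$. Then $N=0$ or $N=A_S(d)$.
   Context: Let $\mathrm{IS}=\{0,\frac12,\frac1{16}\}$ with fusion rule $\star$ (values are subsets): $0\star h=h\star0=\{h\}$, $\frac12\star\frac12=\{0\}$, $\frac12\star\frac1{16}=\frac1{16}\star\frac12=\{\frac1{16}\}$, $\frac1{16}\star\frac1{16}=\{0,\frac12\}$; $A(h_0,h_1,h_2,h_3)=\{h: h\in h_2\star h_3,\ h_0\in h_1\star h\}$. For $h\in A(h_0,h_1,h_2,h_3)$, $h'\in A(h_0,h_2,h_1,h_3)$ define $B^{h,h'}_{h_0,h_1,h_2,h_3}$: $B_{*,0,*,*}=B_{*,*,0,*}=1$; $B_{*,\frac12,\frac12,*}=-1$; $B_{a,\frac12,\frac1{16},a'}=B_{a,\frac1{16},\frac12,a'}=i$ if $a$ or $a'$ is $\frac12$, else $-i$; $B^{b,b'}_{a,\frac1{16},\frac1{16},a'}=e^{-\pi i/8}\cdot\{1$ if $a,a'\ne\frac1{16},a=a'$; $i$ if $a,a'\neq\frac1{16},a\ne a'$; $\frac{1+i}2$ if $a=a'=\frac1{16},b=b'$; $\frac{1-i}2$ if $a=a'=\frac1{16},b\neq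 b'\}$. $\mathrm{IS}^{(l,r)}=\mathrm{IS}^l\times\mathrm{IS}^r$, $\lambda=(h_1,..,h_l,\bar h_1,..,\bar h_r)$, $s(\lambda)=\sum h_i-\sum\bar h_j$; $\star$, $A$ componentwise; $B^{\lambda,\lambda'}_{\lambda^0,\dots,\lambda^3}=\prod_{i\le l}B^{h_i,h'_i}_{h^0_i,\dots,h^3_i}\prod_{j\le r}\overline{B^{\bar h_j,\bar h'_j}_{\bar h^0_j,\dots,\bar h^3_j}}$. An $(l,r)$-framed algebra: finite-dimensional $\mathrm{IS}^{(l,r)}$-graded $S=\bigoplus S_\lambda$ over $\mathbb{C}$ with bilinear product, nonzero $1\in S_0$, $a\cdot_\lambda b$ the $S_\lambda$-component of $a\cdot b$, satisfying (FA1) $S_\lambda=0$ unless $s(\lambda)\in\mathbb{Z}$; (FA2) $S_0=\mathbb{C}1$, $1$ a two-sided unit; (FA3) $S_{\lambda^1}\cdot S_{\lambda^2}\subset\bigoplus_{\lambda\in\lambda^1\star\lambda^2}S_\lambda$; (FA4) $a_2\cdot_{\lambda^0}(a_1\cdot_{\lambda'}a_3)=\sum_{\lambda\in A(\lambda^0,\lambda^1,\lambda^2,\lambda^3)}B^{\lambda,\lambda'}_{\lambda^0,\lambda^1,\lambda^2,\lambda^3}a_1\cdot_{\lambda^0}(a_2\cdot_\lambda a_3)$ for $a_i\in S_{\lambda^i}$, $\lambda'\in A(\lambda^0,\lambda^2,\lambda^1,\lambda^3)$. Ideal: graded subspace $M$ with $S\cdot M\subset M$; simple: only ideals $0$ and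 $S$. Identify $\mathrm{IS}$ with $\{(d,c)\in\mathbb{Z}_2^2:dc=0\}$ via $0\leftrightarrow(0,0)$, $\frac12\leftrightarrow(0,1)$, $\frac1{16}\leftrightarrow(1,0)$, and componentwise $\mathrm{IS}^{(l,r)}$ with pairs $(d,c)\in(\mathbb{Z}_2^{l+r})^2$, $dc=0$; $S_{(d,c)}$ is the corresponding graded piece. *)

theory Defs
  imports Complex_Main
begin

datatype IS = IS0 | IShalf | ISsixteenth

definition weight :: "IS \<Rightarrow> rat" where
  "weight h = (case h of IS0 \<Rightarrow> 0 | IShalf \<Rightarrow> 1/2 | ISsixteenth \<Rightarrow> 1/16)"

fun fus :: "IS \<Rightarrow> IS \<Rightarrow> IS set" where
  "fus IS0 h = {h}"
| "fus h IS0 = {h}"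
| "fus IShalf IShalf = {IS0}"
| "fus IShalf ISsixteenth = {ISsixteenth}"
| "fus ISsixteenth IShalf = {ISsixteenth}"
| "fus ISsixteenth ISsixteenth = {IS0, IShalf}"

definition Aset :: "IS \<Rightarrow> IS \<Rightarrow> IS \<Rightarrow> IS \<Rightarrow> IS set" where
  "Aset h0 h1 h2 h3 = {h. h \<in> fus h2 h3 \<and> h0 \<in> fus h1 h}"

text \<open>Bmat b b' h0 h1 h2 h3 is the coefficient B^{b,b'}_{h0,h1,h2,h3}.
  Outside the cases listed in the paper (which are irrelevant since then A is empty) it is 0.\<close>
definition Bmat :: "IS \<Rightarrow> IS \<Rightarrow> IS \<Rightarrow> IS \<Rightarrow> IS \<Rightarrow> IS \<Rightarrow> complex" where
  "Bmat b b' a h1 h2 a' =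
    (if h1 = IS0 \<or> h2 = IS0 then 1
     else if h1 = IShalf \<and> h2 = IShalf then -1
     else if (h1 = IShalf \<and> h2 = ISsixteenth) \<or> (h1 = ISsixteenth \<and> h2 = IShalf)
       then (if a = IShalf \<or> a' = IShalf then \<i> else - \<i>)
     else exp (- (complex_of_real pi * \<i> / 8)) *
       (if a \<noteq> ISsixteenth \<and> a' \<noteq> ISsixteenth then (if a = a' then 1 else \<i>)
        else if a = ISsixteenth \<and> a' = ISsixteenth then
          (if b = b' then (1 + \<i>) / 2 else (1 - \<i>) / 2)
        else 0))"

section \<open>Componentwise data on IS^(l,r), represented as lists of length l+r
  (first l entries holomorphic, last r antiholomorphic)\<close>

definition grades :: "nat \<Rightarrow> nat \<Rightarrow> IS list set" where
  "grades l r = {lam. length lam = l + r}"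

definition zero_grade :: "nat \<Rightarrow> nat \<Rightarrow> IS list" where
  "zero_grade l r = replicate (l + r) IS0"

definition sgrade :: "nat \<Rightarrow> nat \<Rightarrow> IS list \<Rightarrow> rat" where
  "sgrade l r lam = (\<Sum>i<l. weight (lam ! i)) - (\<Sum>j\<in>{l..<l+r}. weight (lam ! j))"

definition fusL :: "IS list \<Rightarrow> IS list \<Rightarrow> IS list set" where
  "fusL x y = {z. length z = length x \<and> length y = length x \<and>
                  (\<forall>i<length x. z ! i \<in> fus (x ! i) (y ! i))}"

definition AsetL :: "IS list \<Rightarrow> IS list \<Rightarrow> IS list \<Rightarrow> IS list \<Rightarrow> IS list set" where
  "AsetL x0 x1 x2 x3 = {z. length z = length x0 \<and> length x1 = length x0 \<and>
        length x2 = length x0 \<and> length x3 = length x0 \<and>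
        (\<forall>i<length x0. z ! i \<in> Aset (x0 ! i) (x1 ! i) (x2 ! i) (x3 ! i))}"

definition BmatL :: "nat \<Rightarrow> nat \<Rightarrow> IS list \<Rightarrow> IS list \<Rightarrow> IS list \<Rightarrow> IS list \<Rightarrow> IS list \<Rightarrow> IS list \<Rightarrow> complex" where
  "BmatL l r z z' x0 x1 x2 x3 =
     (\<Prod>i<l. Bmat (z ! i) (z' ! i) (x0 ! i) (x1 ! i) (x2 ! i) (x3 ! i)) *
     (\<Prod>j\<in>{l..<l+r}. cnj (Bmat (z ! j) (z' ! j) (x0 ! j) (x1 ! j) (x2 ! j) (x3 ! j)))"

text \<open>The algebra S is the complex vector space 'v (scalar multiplication sc).
  Its grading S = (+)_lam S_lam is given by the family of projections proj lam onto the
  graded pieces S_lam = range (proj lam); mult is the product, one the unit.\<close>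

definition Spc :: "(IS list \<Rightarrow> 'v \<Rightarrow> 'v) \<Rightarrow> IS list \<Rightarrow> 'v set" where
  "Spc proj lam = range (proj lam)"

definition framed_algebra ::
  "nat \<Rightarrow> nat \<Rightarrow> (complex \<Rightarrow> 'v::ab_group_add \<Rightarrow> 'v) \<Rightarrow> (IS list \<Rightarrow> 'v \<Rightarrow> 'v)
     \<Rightarrow> ('v \<Rightarrow> 'v \<Rightarrow> 'v) \<Rightarrow> 'v \<Rightarrow> bool" where
  "framed_algebra l r sc proj mult one \<longleftrightarrow>
     \<comment> \<open>finite-dimensional complex vector space\<close>
     (\<exists>B. finite_dimensional_vector_space sc B) \<and>
     \<comment> \<open>grading as an internal direct sum indexed by IS^(l,r)\<close>
     (\<forall>lam. Vector_Spaces.linear sc sc (proj lam)) \<and>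
     (\<forall>lam mu x. proj lam (proj mu x) = (if lam = mu then proj mu x else 0)) \<and>
     (\<forall>lam x. lam \<notin> grades l r \<longrightarrow> proj lam x = 0) \<and>
     (\<forall>x. x = (\<Sum>lam\<in>grades l r. proj lam x)) \<and>
     \<comment> \<open>bilinear product\<close>
     (\<forall>a. Vector_Spaces.linear sc sc (mult a)) \<and>
     (\<forall>b. Vector_Spaces.linear sc sc (\<lambda>a. mult a b)) \<and>
     \<comment> \<open>nonzero unit in S_0\<close>
     one \<noteq> 0 \<and> one \<in> Spc proj (zero_grade l r) \<and>
     \<comment> \<open>(FA1)\<close>
     (\<forall>lam \<in> grades l r. sgrade l r lam \<notin> \<int> \<longrightarrow> Spc proj lam = {0}) \<and>
     \<comment> \<open>(FA2)\<close>
     Spc proj (zero_grade l r) = range (\<lambda>c. sc c one) \<and>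
     (\<forall>x. mult one x = x \<and> mult x one = x) \<and>
     \<comment> \<open>(FA3)\<close>
     (\<forall>l1\<in>grades l r. \<forall>l2\<in>grades l r. \<forall>a\<in>Spc proj l1. \<forall>b\<in>Spc proj l2.
        \<forall>lam. lam \<notin> fusL l1 l2 \<longrightarrow> proj lam (mult a b) = 0) \<and>
     \<comment> \<open>(FA4)\<close>
     (\<forall>l0\<in>grades l r. \<forall>l1\<in>grades l r. \<forall>l2\<in>grades l r. \<forall>l3\<in>grades l r.
      \<forall>a1\<in>Spc proj l1. \<forall>a2\<in>Spc proj l2. \<forall>a3\<in>Spc proj l3.
      \<forall>lam'\<in>AsetL l0 l2 l1 l3.
        proj l0 (mult a2 (proj lam' (mult a1 a3))) =
        (\<Sum>lam\<in>AsetL l0 l1 l2 l3.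
            sc (BmatL l r lam lam' l0 l1 l2 l3) (proj l0 (mult a1 (proj lam (mult a2 a3))))))"

definition graded_subspace :: "(complex \<Rightarrow> 'v::ab_group_add \<Rightarrow> 'v) \<Rightarrow> (IS list \<Rightarrow> 'v \<Rightarrow> 'v) \<Rightarrow> 'v set \<Rightarrow> bool" where
  "graded_subspace sc proj M \<longleftrightarrow> module.subspace sc M \<and> (\<forall>x\<in>M. \<forall>lam. proj lam x \<in> M)"

definition fa_ideal :: "(complex \<Rightarrow> 'v::ab_group_add \<Rightarrow> 'v) \<Rightarrow> (IS list \<Rightarrow> 'v \<Rightarrow> 'v) \<Rightarrow> ('v \<Rightarrow> 'v \<Rightarrow> 'v) \<Rightarrow> 'v set \<Rightarrow> bool" where
  "fa_ideal sc proj mult M \<longleftrightarrow> graded_subspace sc proj M \<and> (\<forall>a x. x \<in> M \<longrightarrow> mult a x \<in> M)"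

definition simple_framed_algebra ::
  "nat \<Rightarrow> nat \<Rightarrow> (complex \<Rightarrow> 'v::ab_group_add \<Rightarrow> 'v) \<Rightarrow> (IS list \<Rightarrow> 'v \<Rightarrow> 'v)
     \<Rightarrow> ('v \<Rightarrow> 'v \<Rightarrow> 'v) \<Rightarrow> 'v \<Rightarrow> bool" where
  "simple_framed_algebra l r sc proj mult one \<longleftrightarrow>
     framed_algebra l r sc proj mult one \<and>
     (\<forall>M. fa_ideal sc proj mult M \<longrightarrow> M = {0} \<or> M = UNIV)"

text \<open>0 = (0,0), 1/2 = (0,1), 1/16 = (1,0); dpart gives the d-coordinate.\<close>
definition dpart :: "IS \<Rightarrow> bool" where
  "dpart h = (h = ISsixteenth)"

definition dvec :: "IS list \<Rightarrow> bool list" where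
  "dvec lam = map dpart lam"

definition AS :: "(IS list \<Rightarrow> 'v::zero \<Rightarrow> 'v) \<Rightarrow> bool list \<Rightarrow> 'v set" where
  "AS proj d = {x. \<forall>lam. dvec lam \<noteq> d \<longrightarrow> proj lam x = 0}"

definition DS :: "nat \<Rightarrow> nat \<Rightarrow> (IS list \<Rightarrow> 'v::zero \<Rightarrow> 'v) \<Rightarrow> bool list set" where
  "DS l r proj = {d. length d = l + r \<and> AS proj d \<noteq> {0}}"

end

theory Submission
  imports Defs
begin

lemma IS_UNIV: "(UNIV :: IS set) = {IS0, IShalf, ISsixteenth}"
  using IS.exhaust by auto

lemma fin_grades: "finite (grades l r)"
proof -
  have "grades l r = {xs. set xs \<subseteq> (UNIV::IS set) \<and> length xs = l + r}"
    unfolding grades_def by auto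
  moreover have "finite (UNIV::IS set)" by (simp add: IS_UNIV)
  ultimately show ?thesis using finite_lists_length_eq[of "UNIV::IS set" "l+r"] by simp
qed

lemma fus_0: "fus x IS0 = {x}"
  by (cases x) auto

lemma dpart_xor: "z \<in> fus y x \<Longrightarrow> dpart z = dpart y \<Longrightarrow> \<not> dpart x"
  by (cases x; cases y) (auto simp: dpart_def)

lemma lin_comp:
  "Vector_Spaces.linear s1 s2 f \<Longrightarrow> Vector_Spaces.linear s2 s3 g \<Longrightarrow> Vector_Spaces.linear s1 s3 (\<lambda>x. g (f x))"
  using Vector_Spaces.linear_compose[of s1 s2 f s3 g] by (simp add: o_def)

locale FAL =
  fixes l r :: nat and sc :: "complex \<Rightarrow> 'v::ab_group_add \<Rightarrow> 'v"
    and proj :: "IS list \<Rightarrow> 'v \<Rightarrow> 'v" and mult :: "'v \<Rightarrow> 'v \<Rightarrow> 'v" and one :: 'v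
  assumes fa: "framed_algebra l r sc proj mult one"
begin

lemma vs: "vector_space sc"
  using fa unfolding framed_algebra_def finite_dimensional_vector_space_def by blast

sublocale vector_space sc by (rule vs)
sublocale P: vector_space_pair sc sc using vs by (simp add: vector_space_pair_def)

lemma F_lin_proj: "\<forall>lam. Vector_Spaces.linear sc sc (proj lam)"
  using fa unfolding framed_algebra_def by (elim conjE) assumption
lemma F_pp: "\<forall>lam mu x. proj lam (proj mu x) = (if lam = mu then proj mu x else 0)"
  using fa unfolding framed_algebra_def by (elim conjE) assumption
lemma F_pout: "\<forall>lam x. lam \<notin> grades l r \<longrightarrow> proj lam x = 0"
  using fa unfolding framed_algebra_def by (elim conjE) assumption
lemma F_dec: "\<forall>x. x = (\<Sum>lam\<in>grades l r. proj lam x)"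
  using fa unfolding framed_algebra_def by (elim conjE) assumption
lemma F_lin_mult: "\<forall>a. Vector_Spaces.linear sc sc (mult a)"
  using fa unfolding framed_algebra_def by (elim conjE) assumption
lemma F_lin_multr: "\<forall>b. Vector_Spaces.linear sc sc (\<lambda>a. mult a b)"
  using fa unfolding framed_algebra_def by (elim conjE) assumption
lemma one_sp: "one \<in> Spc proj (zero_grade l r)"
  using fa unfolding framed_algebra_def by (elim conjE) assumption
lemma F_unit: "\<forall>x. mult one x = x \<and> mult x one = x"
  using fa unfolding framed_algebra_def by (elim conjE) assumption
lemma F_FA3: "\<forall>l1\<in>grades l r. \<forall>l2\<in>grades l r. \<forall>a\<in>Spc proj l1. \<forall>b\<in>Spc proj l2.
        \<forall>lam. lam \<notin> fusL l1 l2 \<longrightarrow> proj lam (mult a b) = 0"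
  using fa unfolding framed_algebra_def by (elim conjE) assumption
lemma F_FA4: "\<forall>l0\<in>grades l r. \<forall>l1\<in>grades l r. \<forall>l2\<in>grades l r. \<forall>l3\<in>grades l r.
      \<forall>a1\<in>Spc proj l1. \<forall>a2\<in>Spc proj l2. \<forall>a3\<in>Spc proj l3.
      \<forall>lam'\<in>AsetL l0 l2 l1 l3.
        proj l0 (mult a2 (proj lam' (mult a1 a3))) =
        (\<Sum>lam\<in>AsetL l0 l1 l2 l3.
            sc (BmatL l r lam lam' l0 l1 l2 l3) (proj l0 (mult a1 (proj lam (mult a2 a3)))))"
  using fa unfolding framed_algebra_def by (elim conjE) assumption

lemma lin_proj: "Vector_Spaces.linear sc sc (proj lam)" using F_lin_proj by blast
lemma pp: "proj lam (proj mu x) = (if lam = mu then proj mu x else 0)" using F_pp by blast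
lemma pout: "lam \<notin> grades l r \<Longrightarrow> proj lam x = 0" using F_pout by blast
lemma dec: "x = (\<Sum>lam\<in>grades l r. proj lam x)" using F_dec by blast
lemma lin_mult: "Vector_Spaces.linear sc sc (mult a)" using F_lin_mult by blast
lemma lin_multr: "Vector_Spaces.linear sc sc (\<lambda>a. mult a b)" using F_lin_multr by blast
lemma unit: "mult one x = x" "mult x one = x" using F_unit by blast+
lemma FA3: "l1 \<in> grades l r \<Longrightarrow> l2 \<in> grades l r \<Longrightarrow> a \<in> Spc proj l1 \<Longrightarrow> b \<in> Spc proj l2 \<Longrightarrow>
    lam \<notin> fusL l1 l2 \<Longrightarrow> proj lam (mult a b) = 0"
  using F_FA3 by blast
lemma FA4: "l0 \<in> grades l r \<Longrightarrow> l1 \<in> grades l r \<Longrightarrow> l2 \<in> grades l r \<Longrightarrow> l3 \<in> grades l r \<Longrightarrow>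
    a1 \<in> Spc proj l1 \<Longrightarrow> a2 \<in> Spc proj l2 \<Longrightarrow> a3 \<in> Spc proj l3 \<Longrightarrow> lam' \<in> AsetL l0 l2 l1 l3 \<Longrightarrow>
        proj l0 (mult a2 (proj lam' (mult a1 a3))) =
        (\<Sum>lam\<in>AsetL l0 l1 l2 l3.
            sc (BmatL l r lam lam' l0 l1 l2 l3) (proj l0 (mult a1 (proj lam (mult a2 a3)))))"
  using F_FA4 by blast

lemma proj0: "proj lam 0 = 0"
  using P.linear_0[OF lin_proj] .
lemma mult0: "mult a 0 = 0"
  using P.linear_0[OF lin_mult] .

lemma Spc_proj: "a \<in> Spc proj lam \<Longrightarrow> proj lam a = a"
  unfolding Spc_def using pp by auto
lemma Spc_in: "proj lam x \<in> Spc proj lam"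
  unfolding Spc_def by auto

lemma decomp0: "subspace M \<Longrightarrow> (\<And>lam. lam \<in> grades l r \<Longrightarrow> proj lam x \<in> M) \<Longrightarrow> x \<in> M"
  using dec[of x] subspace_sum[of M "grades l r" "\<lambda>lam. proj lam x"] by simp

lemma decomp_in:
  assumes "subspace M" "Vector_Spaces.linear sc sc f"
    "\<And>lam. lam \<in> grades l r \<Longrightarrow> f (proj lam x) \<in> M"
  shows "f x \<in> M"
proof -
  have "f x = f (\<Sum>lam\<in>grades l r. proj lam x)" using dec[of x] by simp
  also have "\<dots> = (\<Sum>lam\<in>grades l r. f (proj lam x))" using P.linear_sum[OF assms(2)] by simp
  moreover have "(\<Sum>lam\<in>grades l r. f (proj lam x)) \<in> M"
    by (rule subspace_sum[OF assms(1)]) (rule assms(3))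
  ultimately show ?thesis by simp
qed

lemma zero_grades: "zero_grade l r \<in> grades l r"
  unfolding zero_grade_def grades_def by simp

lemma skew:
  assumes N: "subspace N" and g: "l0 \<in> grades l r" "l1 \<in> grades l r" "l2 \<in> grades l r"
    and a: "a \<in> Spc proj l1" and n: "n \<in> Spc proj l2"
    and h: "proj l0 (mult a n) \<in> N"
  shows "proj l0 (mult n a) \<in> N"
proof (cases "l0 \<in> fusL l2 l1")
  case False
  then show ?thesis using FA3[OF g(3) g(2) n a] subspace_0[OF N] by simp
next
  case True
  have L: "length l0 = l + r" "length l1 = l + r" "length l2 = l + r"
    using g unfolding grades_def by auto
  have A: "l1 \<in> AsetL l0 l2 l1 (zero_grade l r)"
    using True L unfolding AsetL_def fusL_def Aset_def zero_grade_def by (auto simp: fus_0)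
  have "proj l0 (mult n (proj l1 (mult a one))) = (\<Sum>lam\<in>AsetL l0 l1 l2 (zero_grade l r).
            sc (BmatL l r lam l1 l0 l1 l2 (zero_grade l r)) (proj l0 (mult a (proj lam (mult n one)))))"
    by (rule FA4[OF g zero_grades a n one_sp A])
  moreover have "proj l0 (mult n (proj l1 (mult a one))) = proj l0 (mult n a)"
    using Spc_proj[OF a] unit by simp
  moreover have "proj l0 (mult a (proj lam (mult n one))) \<in> N" for lam
  proof (cases "lam = l2")
    case True then show ?thesis using Spc_proj[OF n] unit h by simp
  next
    case False
    have "proj lam n = 0" using Spc_proj[OF n] pp[of lam l2] False n unfolding Spc_def by auto
    then show ?thesis using unit mult0 proj0 subspace_0[OF N] by simp
  qed
  ultimately show ?thesis
    by (auto intro!: subspace_sum[OF N] subspace_scale[OF N])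
qed

lemma final_gen:
  assumes N: "subspace N" and Ng: "\<forall>x\<in>N. \<forall>lam. proj lam x \<in> N"
    and NA: "N \<subseteq> AS proj d"
    and H: "\<forall>a\<in>AS proj (replicate (l + r) False). \<forall>n\<in>N. mult a n \<in> N"
    and n: "n \<in> N" and mu: "dvec mu = d"
  shows "proj mu (mult n a) \<in> N"
proof (cases "mu \<in> grades l r")
  case False then show ?thesis using pout subspace_0[OF N] by simp
next
  case muG: True
  show ?thesis
  proof (rule decomp_in[OF N, where f="\<lambda>y. proj mu (mult y a)"])
    show "Vector_Spaces.linear sc sc (\<lambda>y. proj mu (mult y a))"
      by (rule lin_comp[OF lin_multr lin_proj])
    fix ka assume kaG: "ka \<in> grades l r"
    show "proj mu (mult (proj ka n) a) \<in> N"
    proof (rule decomp_in[OF N, where f="\<lambda>y. proj mu (mult (proj ka n) y)"])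
      show "Vector_Spaces.linear sc sc (\<lambda>y. proj mu (mult (proj ka n) y))"
        by (rule lin_comp[OF lin_mult lin_proj])
      fix nu assume nuG: "nu \<in> grades l r"
      show "proj mu (mult (proj ka n) (proj nu a)) \<in> N"
      proof (cases "proj ka n = 0")
        case True then show ?thesis using mult0 proj0 lin_multr P.linear_0 subspace_0[OF N]
          by (metis)
      next
        case nz: False
        have dka: "dvec ka = d" using NA n nz unfolding AS_def by blast
        show ?thesis
        proof (cases "mu \<in> fusL ka nu")
          case False then show ?thesis using FA3[OF kaG nuG Spc_in Spc_in] subspace_0[OF N] by simp
        next
          case True
          have L: "length mu = l + r" "length ka = l + r" "length nu = l + r"
            using muG kaG nuG unfolding grades_def by auto
          have "dvec nu = replicate (l + r) False"
          proof (rule nth_equalityI)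
            show "length (dvec nu) = length (replicate (l + r) False)" using L by (simp add: dvec_def)
            fix i assume i: "i < length (dvec nu)"
            then have i': "i < l + r" using L by (simp add: dvec_def)
            have "mu ! i \<in> fus (ka ! i) (nu ! i)" using True i' L unfolding fusL_def by auto
            moreover have "dpart (mu ! i) = dpart (ka ! i)"
              using mu dka L i' unfolding dvec_def by (metis nth_map)
            ultimately have "\<not> dpart (nu ! i)" by (rule dpart_xor)
            then show "dvec nu ! i = replicate (l + r) False ! i" using i' L by (simp add: dvec_def)
          qed
          then have "proj nu a \<in> AS proj (replicate (l + r) False)"
            unfolding AS_def using pp by auto
          moreover have "proj ka n \<in> N" using Ng n by blast
          ultimately have "mult (proj nu a) (proj ka n) \<in> N" using H by blast
          then have "proj mu (mult (proj nu a) (proj ka n)) \<in> N" using Ng by blast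
          then show ?thesis by (rule skew[OF N muG nuG kaG Spc_in Spc_in])
        qed
      qed
    qed
  qed
qed

definition Gen :: "'v set \<Rightarrow> 'v set" where
  "Gen N = {proj mu (mult n a) | mu n a. n \<in> N}"

lemma gen_hom:
  assumes n: "n \<in> N" and g: "l0 \<in> grades l r" "l1 \<in> grades l r" "l2 \<in> grades l r" "l3 \<in> grades l r"
    and b: "b \<in> Spc proj l2" and nS: "n \<in> Spc proj l1" and a: "a \<in> Spc proj l3"
  shows "proj l0 (mult b (proj mu (mult n a))) \<in> span (Gen N)"
proof (cases "mu \<in> grades l r")
  case False then show ?thesis using pout mult0 proj0 span_zero by simp
next
  case muG: True
  show ?thesis
  proof (cases "mu \<in> AsetL l0 l2 l1 l3")
    case True
    show ?thesis
      unfolding FA4[OF g(1) g(2) g(3) g(4) nS b a True]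
      by (rule span_sum, rule span_scale, rule span_base) (auto simp: Gen_def intro: n)
  next
    case False
    have L: "length mu = l + r" "length l0 = l + r" "length l1 = l + r" "length l2 = l + r" "length l3 = l + r"
      using muG g unfolding grades_def by auto
    then have "mu \<notin> fusL l1 l3 \<or> l0 \<notin> fusL l2 mu"
      using False unfolding AsetL_def fusL_def Aset_def by auto
    then show ?thesis
    proof
      assume "mu \<notin> fusL l1 l3"
      then show ?thesis using FA3[OF g(2) g(4) nS a] mult0 proj0 span_zero by simp
    next
      assume "l0 \<notin> fusL l2 mu"
      then show ?thesis using FA3[OF g(3) muG b Spc_in] span_zero by simp
    qed
  qed
qed

lemma gen_all:
  assumes Ng: "\<forall>x\<in>N. \<forall>lam. proj lam x \<in> N" and n: "n \<in> N"
  shows "mult b (proj mu (mult n a)) \<in> span (Gen N)"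
proof (rule decomp0[OF subspace_span])
  fix l0 assume g0: "l0 \<in> grades l r"
  show "proj l0 (mult b (proj mu (mult n a))) \<in> span (Gen N)"
  proof (rule decomp_in[OF subspace_span, where f="\<lambda>y. proj l0 (mult y (proj mu (mult n a)))"])
    show "Vector_Spaces.linear sc sc (\<lambda>y. proj l0 (mult y (proj mu (mult n a))))"
      by (rule lin_comp[OF lin_multr lin_proj])
    fix l2 assume g2: "l2 \<in> grades l r"
    show "proj l0 (mult (proj l2 b) (proj mu (mult n a))) \<in> span (Gen N)"
    proof (rule decomp_in[OF subspace_span, where f="\<lambda>y. proj l0 (mult (proj l2 b) (proj mu (mult y a)))"])
      show "Vector_Spaces.linear sc sc (\<lambda>y. proj l0 (mult (proj l2 b) (proj mu (mult y a))))"
        by (rule lin_comp[OF lin_comp[OF lin_comp[OF lin_multr lin_proj] lin_mult] lin_proj])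
      fix l1 assume g1: "l1 \<in> grades l r"
      show "proj l0 (mult (proj l2 b) (proj mu (mult (proj l1 n) a))) \<in> span (Gen N)"
      proof (rule decomp_in[OF subspace_span, where f="\<lambda>y. proj l0 (mult (proj l2 b) (proj mu (mult (proj l1 n) y)))"])
        show "Vector_Spaces.linear sc sc (\<lambda>y. proj l0 (mult (proj l2 b) (proj mu (mult (proj l1 n) y))))"
          by (rule lin_comp[OF lin_comp[OF lin_comp[OF lin_mult lin_proj] lin_mult] lin_proj])
        fix l3 assume g3: "l3 \<in> grades l r"
        have "proj l0 (mult (proj l2 b) (proj mu (mult (proj l1 n) (proj l3 a)))) \<in> span (Gen (N))"
          using gen_hom[of "proj l1 n" N, OF _ g0 g1 g2 g3 Spc_in Spc_in Spc_in] Ng n by blast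
        then show "proj l0 (mult (proj l2 b) (proj mu (mult (proj l1 n) (proj l3 a)))) \<in> span (Gen N)" .
      qed
    qed
  qed
qed

lemma ideal:
  assumes Ng: "\<forall>x\<in>N. \<forall>lam. proj lam x \<in> N"
  shows "fa_ideal sc proj mult (span (Gen N))"
  unfolding fa_ideal_def graded_subspace_def
proof (intro conjI allI ballI impI)
  show "subspace (span (Gen N))" by simp
next
  fix x lam assume "x \<in> span (Gen N)"
  then show "proj lam x \<in> span (Gen N)"
  proof (induct rule: span_induct)
    case base show ?case by (rule P.linear_subspace_linear_preimage[OF lin_proj subspace_span])
  next
    case (step y)
    then obtain mu n a where y: "y = proj mu (mult n a)" "n \<in> N" unfolding Gen_def by blast
    show ?case
    proof (cases "lam = mu")
      case True then show ?thesis using y pp step span_base by simp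
    next
      case False then show ?thesis using y pp span_zero by simp
    qed
  qed
next
  fix a x assume "x \<in> span (Gen N)"
  then show "mult a x \<in> span (Gen N)"
  proof (induct rule: span_induct)
    case base show ?case by (rule P.linear_subspace_linear_preimage[OF lin_mult subspace_span])
  next
    case (step y)
    then obtain mu n b where y: "y = proj mu (mult n b)" "n \<in> N" unfolding Gen_def by blast
    then show ?case using gen_all[OF Ng] by simp
  qed
qed

lemma N_sub: "n \<in> N \<Longrightarrow> n \<in> span (Gen N)"
proof -
  assume n: "n \<in> N"
  have "mult n one \<in> span (Gen N)"
  proof (rule decomp0[OF subspace_span])
    fix lam show "proj lam (mult n one) \<in> span (Gen N)"
      by (rule span_base) (auto simp: Gen_def intro: n)
  qed
  then show ?thesis using unit(2) by simp
qed

end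

theorem mainTheorem9:
  fixes l r :: nat
    and sc :: "complex \<Rightarrow> 'v::ab_group_add \<Rightarrow> 'v"
    and proj :: "IS list \<Rightarrow> 'v \<Rightarrow> 'v"
    and mult :: "'v \<Rightarrow> 'v \<Rightarrow> 'v"
    and one :: 'v
    and d :: "bool list"
    and N :: "'v set"
  assumes "simple_framed_algebra l r sc proj mult one"
    and "d \<in> DS l r proj"
    and "graded_subspace sc proj N"
    and "N \<subseteq> AS proj d"
    and "\<forall>a\<in>AS proj (replicate (l + r) False). \<forall>n\<in>N. mult a n \<in> N"
  shows "N = {0} \<or> N = AS proj d"
  proof -
  interpret F: FAL l r sc proj mult one
    by unfold_locales (use assms(1) in \<open>simp add: simple_framed_algebra_def\<close>)
  have Ns: "F.subspace N" and Ng: "\<forall>x\<in>N. \<forall>lam. proj lam x \<in> N"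
    using assms(3) unfolding graded_subspace_def by auto
  have simp: "\<And>M. fa_ideal sc proj mult M \<Longrightarrow> M = {0} \<or> M = UNIV"
    using assms(1) unfolding simple_framed_algebra_def by blast
  show ?thesis
  proof (cases "N = {0}")
    case True then show ?thesis by simp
  next
    case False
    then obtain n0 where n0: "n0 \<in> N" "n0 \<noteq> 0" using F.subspace_0[OF Ns] by blast
    have "F.span (F.Gen N) = {0} \<or> F.span (F.Gen N) = UNIV" by (rule simp[OF F.ideal[OF Ng]])
    moreover have "n0 \<in> F.span (F.Gen N)" by (rule F.N_sub[OF n0(1)])
    ultimately have MU: "F.span (F.Gen N) = UNIV" using n0 by blast
    define G where "G = {lam \<in> grades l r. dvec lam = d}"
    have finG: "finite G" unfolding G_def using fin_grades by simp
    define Pd where "Pd = (\<lambda>y. \<Sum>lam\<in>G. proj lam y)"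
    have linP: "Vector_Spaces.linear sc sc Pd"
      unfolding Pd_def by (rule F.P.linear_compose_sum) (simp add: F.lin_proj)
    have PN: "Pd y \<in> N" for y
    proof -
      have "y \<in> F.span (F.Gen N)" using MU by simp
      then show ?thesis
      proof (induct rule: F.span_induct)
        case base show ?case by (rule F.P.linear_subspace_linear_preimage[OF linP Ns])
      next
        case (step y)
        then obtain mu n a where y: "y = proj mu (mult n a)" "n \<in> N" unfolding F.Gen_def by blast
        have "Pd y = (\<Sum>lam\<in>G. if lam = mu then proj mu (mult n a) else 0)"
          unfolding Pd_def y by (rule sum.cong) (auto simp: F.pp)
        also have "\<dots> = (if mu \<in> G then proj mu (mult n a) else 0)"
          using finG by simp
        finally show ?case
          using F.final_gen[OF Ns Ng assms(4) assms(5) y(2), of mu a] F.subspace_0[OF Ns]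
          unfolding G_def by auto
      qed
    qed
    show ?thesis
    proof (rule disjI2, rule subset_antisym[OF assms(4)], rule subsetI)
      fix x assume x: "x \<in> AS proj d"
      have "x = (\<Sum>lam\<in>grades l r. proj lam x)" by (rule F.dec)
      also have "\<dots> = Pd x" unfolding Pd_def
        by (rule sum.mono_neutral_right[OF fin_grades]) (use x in \<open>auto simp: G_def AS_def\<close>)
      finally show "x \<in> N" using PN[of x] by metis
    qed
  qed
qed

end
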